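(* Let $k\equiv\pm2,\pm4\pmod{10}$. Then $\operatorname{Ker}\nu_{G^k}=\{M=\begin{pmatrix} a&b\\ c&d\end{pmatrix}\in\Gamma_{\theta,5}: (b,c\in5\mathbb{Z}\text{ and }\tfrac b5\equiv\tfrac c5\pmod5)\text{ or }(a,d\in5\mathbb{Z}\text{ and }\tfrac a5\equiv-\tfrac d5\pmod5)\}$; in particular $\operatorname{Ker}\nu_{G^k}=\operatorname{Ker}\nu_{F^k}$.
   Context: $\Gamma_{\theta,5}=\{M\in SL(2,\mathbb{Z}): M\equiv\pm\begin{pmatrix}1&0\\0&1\end{pmatrix}\text{ or }\pm\begin{pmatrix}0&-1\\1&0\end{pmatrix}\pmod 5\}$. For $M=\begin{pmatrix} a&b\\ c&d\end{pmatrix}\in\Gamma_{\theta,5}$ define $g(M)=\frac{6b}{5}+\frac{2ab}{5}+\frac{2cd}{5}$ if $M\equiv I$, $\frac{24b}{5}+\frac{2ab}{5}+\frac{2cd}{5}$ if $M\equiv -I$, $5+\frac{6d}{5}+\frac{2ab}{5}+\frac{2cd}{5}$ if $M\equiv\begin{pmatrix}0&-1\\1&0\end{pmatrix}$, $5-\frac{6d}{5}+\frac{2ab}{5}+\frac{2cd}{5}$ if $M\equiv\begin{pmatrix}0&1\\-1&0\end{pmatrix}$ (all mod 5), and $f(M)$ by the same case split with values $\frac{4b}{5}+\frac{8ab}{5}+\frac{8cd}{5}$, $\frac{6b}{5}+\frac{8ab}{5}+\frac{8cd}{5}$, $5+\frac{4d}{5}+\frac{8ab}{5}+\frac{8cd}{5}$,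 $5-\frac{4d}{5}+\frac{8ab}{5}+\frac{8cd}{5}$ respectively. For $k\in\mathbb{Z}$, $\nu_{G^k}(M)=\exp(\frac{\pi ik}{5}g(M))$ and $\nu_{F^k}(M)=\exp(\frac{\pi ik}{5}f(M))$; these are the multiplier systems (weight $2k$) of $G^k$ and $F^k$, where $G=\eta^6/\big(\theta\begin{bmatrix}3/5\\3/5\end{bmatrix}\theta\begin{bmatrix}3/5\\7/5\end{bmatrix}\big)$, $F=\eta^6/\big(\theta\begin{bmatrix}1/5\\1/5\end{bmatrix}\theta\begin{bmatrix}1/5\\9/5\end{bmatrix}\big)$, with theta constants $\theta\begin{bmatrix}\epsilon\\ \epsilon'\end{bmatrix}=\sum_{n\in\mathbb{Z}}\exp(2\pi i[\frac12(n+\frac\epsilon2)^2\tau+(n+\frac\epsilon2)\frac{\epsilon'}2])$ and $\eta(\tau)=q^{1/24}\prod_{n\ge1}(1-q^n)$. Kernels are $\{M\in\Gamma_{\theta,5}:\nu(M)=1\}$. *)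

theory Defs
  imports Complex_Main "HOL-Number_Theory.Cong"
begin

text \<open>A matrix (a b; c d) in SL(2,Z) is represented by the quadruple (a,b,c,d).\<close>
type_synonym mat2 = "int \<times> int \<times> int \<times> int"

definition SL2Z :: "mat2 set" where
  "SL2Z = {(a,b,c,d). a*d - b*c = 1}"

definition congI :: "mat2 \<Rightarrow> bool" where
  "congI M = (case M of (a,b,c,d) \<Rightarrow>
     [a = 1] (mod 5) \<and> [b = 0] (mod 5) \<and> [c = 0] (mod 5) \<and> [d = 1] (mod 5))"

definition congmI :: "mat2 \<Rightarrow> bool" where
  "congmI M = (case M of (a,b,c,d) \<Rightarrow>
     [a = -1] (mod 5) \<and> [b = 0] (mod 5) \<and> [c = 0] (mod 5) \<and> [d = -1] (mod 5))"

definition congS :: "mat2 \<Rightarrow> bool" where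
  "congS M = (case M of (a,b,c,d) \<Rightarrow>
     [a = 0] (mod 5) \<and> [b = -1] (mod 5) \<and> [c = 1] (mod 5) \<and> [d = 0] (mod 5))"

definition congmS :: "mat2 \<Rightarrow> bool" where
  "congmS M = (case M of (a,b,c,d) \<Rightarrow>
     [a = 0] (mod 5) \<and> [b = 1] (mod 5) \<and> [c = -1] (mod 5) \<and> [d = 0] (mod 5))"

definition Gamma_theta5 :: "mat2 set" where
  "Gamma_theta5 = {M \<in> SL2Z. congI M \<or> congmI M \<or> congS M \<or> congmS M}"

definition g_fun :: "mat2 \<Rightarrow> real" where
  "g_fun M = (case M of (a,b,c,d) \<Rightarrow>
     let r = 2*a*b/5 + 2*c*d/5 in
     if congI M then 6*b/5 + r
     else if congmI M then 24*b/5 + r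
     else if congS M then 5 + 6*d/5 + r
     else 5 - 6*d/5 + r)"

definition f_fun :: "mat2 \<Rightarrow> real" where
  "f_fun M = (case M of (a,b,c,d) \<Rightarrow>
     let r = 8*a*b/5 + 8*c*d/5 in
     if congI M then 4*b/5 + r
     else if congmI M then 6*b/5 + r
     else if congS M then 5 + 4*d/5 + r
     else 5 - 4*d/5 + r)"

definition nu_G :: "int \<Rightarrow> mat2 \<Rightarrow> complex" where
  "nu_G k M = exp (pi * \<i> * of_int k / 5 * of_real (g_fun M))"

definition nu_F :: "int \<Rightarrow> mat2 \<Rightarrow> complex" where
  "nu_F k M = exp (pi * \<i> * of_int k / 5 * of_real (f_fun M))"

definition ker_nu_G :: "int \<Rightarrow> mat2 set" where
  "ker_nu_G k = {M \<in> Gamma_theta5. nu_G k M = 1}"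

definition ker_nu_F :: "int \<Rightarrow> mat2 set" where
  "ker_nu_F k = {M \<in> Gamma_theta5. nu_F k M = 1}"

end

theory Submission imports Defs "HOL-Analysis.Complex_Transcendental" begin
lemma exp_lem:
  fixes k N :: int
  shows "exp (pi * \<i> * of_int k / 5 * of_real (real_of_int N / 5)) = 1 \<longleftrightarrow> 50 dvd k * N"
proof -
  have e: "pi * \<i> * of_int k / 5 * of_real (real_of_int N / 5) = \<i> * of_real (pi * real_of_int (k*N) / 25)"
    by (simp add: field_simps)
  have "exp (pi * \<i> * of_int k / 5 * of_real (real_of_int N / 5)) = 1 \<longleftrightarrow>
        (\<exists>n::int. pi * real_of_int (k*N) / 25 = of_int (2 * n) * pi)"
    unfolding e exp_eq_1 by simp
  also have "\<dots> \<longleftrightarrow> (\<exists>n::int. k*N = 50 * n)"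
  proof -
    have "pi * real_of_int (k*N) / 25 = of_int (2 * n) * pi \<longleftrightarrow> k*N = 50*n" for n :: int
    proof -
      have "pi * real_of_int (k*N) / 25 = of_int (2 * n) * pi \<longleftrightarrow> real_of_int (k*N) = real_of_int (50*n)"
        using pi_gt_zero by (auto simp: field_simps)
      then show ?thesis by linarith
    qed
    then show ?thesis by simp
  qed
  finally show ?thesis by (auto simp: dvd_def)
qed

definition NG :: "mat2 \<Rightarrow> int" where
  "NG M = (case M of (a,b,c,d) \<Rightarrow>
     let r = 2*a*b + 2*c*d in
     if congI M then 6*b + r
     else if congmI M then 24*b + r
     else if congS M then 25 + 6*d + r
     else 25 - 6*d + r)"

definition NF :: "mat2 \<Rightarrow> int" where
  "NF M = (case M of (a,b,c,d) \<Rightarrow>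
     let r = 8*a*b + 8*c*d in
     if congI M then 4*b + r
     else if congmI M then 6*b + r
     else if congS M then 25 + 4*d + r
     else 25 - 4*d + r)"

lemma g_NG: "g_fun M = real_of_int (NG M) / 5"
  by (cases M) (simp add: g_fun_def NG_def Let_def field_simps)

lemma f_NF: "f_fun M = real_of_int (NF M) / 5"
  by (cases M) (simp add: f_fun_def NF_def Let_def field_simps)

lemma kdiv:
  fixes k N :: int
  assumes "k mod 10 \<in> {2, 4, 6, 8}"
  shows "50 dvd k * N \<longleftrightarrow> 25 dvd N"
proof -
  define u where "u = k div 2"
  have a': "k mod 10 = 2 \<or> k mod 10 = 4 \<or> k mod 10 = 6 \<or> k mod 10 = 8" using assms by simp
  have k: "k = 2 * u" using a' unfolding u_def by presburger
  have "u mod 5 = 1 \<or> u mod 5 = 2 \<or> u mod 5 = 3 \<or> u mod 5 = 4" using a' unfolding u_def by presburger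
  then have um: "u mod 5 \<in> {1,2,3,4}" by simp
  obtain s t where st: "s * u + t * 5 = 1"
  proof -
    define q where "q = u div 5"
    consider "u mod 5 = 1" | "u mod 5 = 2" | "u mod 5 = 3" | "u mod 5 = 4" using um by auto
    then show ?thesis
    proof cases
      case 1 then have "u = 5 * q + 1" unfolding q_def by presburger
      then show ?thesis using that[of 1 "-q"] by (simp add: algebra_simps)
    next
      case 2 then have "u = 5 * q + 2" unfolding q_def by presburger
      then show ?thesis using that[of 3 "-(3*q+1)"] by (simp add: algebra_simps)
    next
      case 3 then have "u = 5 * q + 3" unfolding q_def by presburger
      then show ?thesis using that[of 2 "-(2*q+1)"] by (simp add: algebra_simps)
    next
      case 4 then have "u = 5 * q + 4" unfolding q_def by presburger
      then show ?thesis using that[of 4 "-(4*q+3)"] by (simp add: algebra_simps)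
    qed
  qed
  have "coprime u 5"
  proof (rule coprimeI)
    fix c assume "c dvd u" "c dvd (5::int)"
    then have "c dvd s * u + t * 5" by simp
    then show "is_unit c" using st by simp
  qed
  then have "coprime u (5*5)" by (subst coprime_mult_right_iff) simp
  then have cop: "coprime u 25" by simp
  have gen: "\<forall>m::int. 50 dvd 2*m \<longleftrightarrow> 25 dvd m" by presburger
  have "50 dvd k * N \<longleftrightarrow> 25 dvd u * N" unfolding k using gen by (metis mult.assoc)
  also have "\<dots> \<longleftrightarrow> 25 dvd N" using cop
    by (metis coprime_commute coprime_dvd_mult_right_iff)
  finally show ?thesis .
qed

definition condM :: "int \<Rightarrow> int \<Rightarrow> int \<Rightarrow> int \<Rightarrow> bool" where
  "condM a b c d = ((5 dvd b \<and> 5 dvd c \<and> [b div 5 = c div 5] (mod 5)) \<or>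
            (5 dvd a \<and> 5 dvd d \<and> [a div 5 = - (d div 5)] (mod 5)))"


lemma case_congI:
  assumes h: "congI (a,b,c,d)"
  shows "(25 dvd NG (a,b,c,d) \<longleftrightarrow> condM a b c d) \<and> (25 dvd NF (a,b,c,d) \<longleftrightarrow> condM a b c d)"
proof -
  have m: "[a = 1] (mod 5)" "[b = 0] (mod 5)" "[c = 0] (mod 5)" "[d = 1] (mod 5)"
    using h by (auto simp: congI_def)
  define x where "x = (a - (1)) div 5"
  define y where "y = b div 5"
  define z where "z = c div 5"
  define w where "w = (d - (1)) div 5"
  have ea: "a = 5*x + 1" using m(1) unfolding x_def cong_def by presburger
  have eb: "b = 5*y" using m(2) unfolding y_def cong_def by presburger
  have ec: "c = 5*z" using m(3) unfolding z_def cong_def by presburger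
  have ed: "d = 5*w + 1" using m(4) unfolding w_def cong_def by presburger
  have ne: True by simp
  define t where "t = x*y+z*w"
  have g: "NG (a,b,c,d) = 50*(y+t) - 10*(y - z)"
    using h ne unfolding NG_def t_def Let_def by (simp add: ea eb ec ed algebra_simps)
  have f: "NF (a,b,c,d) = 50*(2*y+4*t) - 40*(y - z)"
    using h ne unfolding NF_def t_def Let_def by (simp add: ea eb ec ed algebra_simps)
  have pg: "\<forall>s u::int. 25 dvd 50 * s - 10*u \<longleftrightarrow> 5 dvd u" by presburger
  have pf: "\<forall>s u::int. 25 dvd 50 * s - 40*u \<longleftrightarrow> 5 dvd u" by presburger
  have c2: "25 dvd NG (a,b,c,d) \<longleftrightarrow> 5 dvd (y - z)" unfolding g using pg by blast
  have c3: "25 dvd NF (a,b,c,d) \<longleftrightarrow> 5 dvd (y - z)" unfolding f using pf by blast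
  have d1: "b div 5 = y" "c div 5 = z" "5 dvd b" "5 dvd c" using eb ec by simp_all
  have d2: "\<not> 5 dvd a" unfolding ea by presburger
  have c1: "condM a b c d \<longleftrightarrow> 5 dvd (y - z)"
    unfolding condM_def using d1 d2 by (simp add: cong_iff_dvd_diff)
  show ?thesis using c1 c2 c3 by simp
qed

lemma case_congmI:
  assumes h: "congmI (a,b,c,d)"
  shows "(25 dvd NG (a,b,c,d) \<longleftrightarrow> condM a b c d) \<and> (25 dvd NF (a,b,c,d) \<longleftrightarrow> condM a b c d)"
proof -
  have m: "[a = -1] (mod 5)" "[b = 0] (mod 5)" "[c = 0] (mod 5)" "[d = -1] (mod 5)"
    using h by (auto simp: congmI_def)
  define x where "x = (a - (-1)) div 5"
  define y where "y = b div 5"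
  define z where "z = c div 5"
  define w where "w = (d - (-1)) div 5"
  have ea: "a = 5*x - 1" using m(1) unfolding x_def cong_def by presburger
  have eb: "b = 5*y" using m(2) unfolding y_def cong_def by presburger
  have ec: "c = 5*z" using m(3) unfolding z_def cong_def by presburger
  have ed: "d = 5*w - 1" using m(4) unfolding w_def cong_def by presburger
  have ne: "\<not> congI (a,b,c,d)"
    unfolding congI_def congmI_def congS_def cong_def using m unfolding cong_def by auto
  define t where "t = x*y+z*w"
  have g: "NG (a,b,c,d) = 50*(2*y+t) + 10*(y - z)"
    using h ne unfolding NG_def t_def Let_def by (simp add: ea eb ec ed algebra_simps)
  have f: "NF (a,b,c,d) = 50*(4*t-y) + 40*(y - z)"
    using h ne unfolding NF_def t_def Let_def by (simp add: ea eb ec ed algebra_simps)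
  have pg: "\<forall>s u::int. 25 dvd 50 * s + 10*u \<longleftrightarrow> 5 dvd u" by presburger
  have pf: "\<forall>s u::int. 25 dvd 50 * s + 40*u \<longleftrightarrow> 5 dvd u" by presburger
  have c2: "25 dvd NG (a,b,c,d) \<longleftrightarrow> 5 dvd (y - z)" unfolding g using pg by blast
  have c3: "25 dvd NF (a,b,c,d) \<longleftrightarrow> 5 dvd (y - z)" unfolding f using pf by blast
  have d1: "b div 5 = y" "c div 5 = z" "5 dvd b" "5 dvd c" using eb ec by simp_all
  have d2: "\<not> 5 dvd a" unfolding ea by presburger
  have c1: "condM a b c d \<longleftrightarrow> 5 dvd (y - z)"
    unfolding condM_def using d1 d2 by (simp add: cong_iff_dvd_diff)
  show ?thesis using c1 c2 c3 by simp
qed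

lemma case_congS:
  assumes h: "congS (a,b,c,d)"
  shows "(25 dvd NG (a,b,c,d) \<longleftrightarrow> condM a b c d) \<and> (25 dvd NF (a,b,c,d) \<longleftrightarrow> condM a b c d)"
proof -
  have m: "[a = 0] (mod 5)" "[b = -1] (mod 5)" "[c = 1] (mod 5)" "[d = 0] (mod 5)"
    using h by (auto simp: congS_def)
  define x where "x = a div 5"
  define y where "y = (b - (-1)) div 5"
  define z where "z = (c - (1)) div 5"
  define w where "w = d div 5"
  have ea: "a = 5*x" using m(1) unfolding x_def cong_def by presburger
  have eb: "b = 5*y - 1" using m(2) unfolding y_def cong_def by presburger
  have ec: "c = 5*z + 1" using m(3) unfolding z_def cong_def by presburger
  have ed: "d = 5*w" using m(4) unfolding w_def cong_def by presburger
  have ne: "\<not> congI (a,b,c,d) \<and> \<not> congmI (a,b,c,d)"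
    unfolding congI_def congmI_def congS_def cong_def using m unfolding cong_def by auto
  define t where "t = x*y+z*w"
  have g: "NG (a,b,c,d) = 25 + 50*(w+t) - 10*(x + w)"
    using h ne unfolding NG_def t_def Let_def by (simp add: ea eb ec ed algebra_simps)
  have f: "NF (a,b,c,d) = 25 + 50*(2*w+4*t) - 40*(x + w)"
    using h ne unfolding NF_def t_def Let_def by (simp add: ea eb ec ed algebra_simps)
  have pg: "\<forall>s u::int. 25 dvd 25 + 50 * s - 10*u \<longleftrightarrow> 5 dvd u" by presburger
  have pf: "\<forall>s u::int. 25 dvd 25 + 50 * s - 40*u \<longleftrightarrow> 5 dvd u" by presburger
  have c2: "25 dvd NG (a,b,c,d) \<longleftrightarrow> 5 dvd (x + w)" unfolding g using pg by blast
  have c3: "25 dvd NF (a,b,c,d) \<longleftrightarrow> 5 dvd (x + w)" unfolding f using pf by blast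
  have d1: "a div 5 = x" "d div 5 = w" "5 dvd a" "5 dvd d" using ea ed by simp_all
  have d2: "\<not> 5 dvd b" unfolding eb by presburger
  have c1: "condM a b c d \<longleftrightarrow> 5 dvd (x + w)"
    unfolding condM_def using d1 d2 by (simp add: cong_iff_dvd_diff)
  show ?thesis using c1 c2 c3 by simp
qed

lemma case_congmS:
  assumes h: "congmS (a,b,c,d)"
  shows "(25 dvd NG (a,b,c,d) \<longleftrightarrow> condM a b c d) \<and> (25 dvd NF (a,b,c,d) \<longleftrightarrow> condM a b c d)"
proof -
  have m: "[a = 0] (mod 5)" "[b = 1] (mod 5)" "[c = -1] (mod 5)" "[d = 0] (mod 5)"
    using h by (auto simp: congmS_def)
  define x where "x = a div 5"
  define y where "y = (b - (1)) div 5"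
  define z where "z = (c - (-1)) div 5"
  define w where "w = d div 5"
  have ea: "a = 5*x" using m(1) unfolding x_def cong_def by presburger
  have eb: "b = 5*y + 1" using m(2) unfolding y_def cong_def by presburger
  have ec: "c = 5*z - 1" using m(3) unfolding z_def cong_def by presburger
  have ed: "d = 5*w" using m(4) unfolding w_def cong_def by presburger
  have ne: "\<not> congI (a,b,c,d) \<and> \<not> congmI (a,b,c,d) \<and> \<not> congS (a,b,c,d)"
    unfolding congI_def congmI_def congS_def cong_def using m unfolding cong_def by auto
  define t where "t = x*y+z*w"
  have g: "NG (a,b,c,d) = 25 + 50*(t-w) + 10*(x + w)"
    using h ne unfolding NG_def t_def Let_def by (simp add: ea eb ec ed algebra_simps)
  have f: "NF (a,b,c,d) = 25 + 50*(4*t-2*w) + 40*(x + w)"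
    using h ne unfolding NF_def t_def Let_def by (simp add: ea eb ec ed algebra_simps)
  have pg: "\<forall>s u::int. 25 dvd 25 + 50 * s + 10*u \<longleftrightarrow> 5 dvd u" by presburger
  have pf: "\<forall>s u::int. 25 dvd 25 + 50 * s + 40*u \<longleftrightarrow> 5 dvd u" by presburger
  have c2: "25 dvd NG (a,b,c,d) \<longleftrightarrow> 5 dvd (x + w)" unfolding g using pg by blast
  have c3: "25 dvd NF (a,b,c,d) \<longleftrightarrow> 5 dvd (x + w)" unfolding f using pf by blast
  have d1: "a div 5 = x" "d div 5 = w" "5 dvd a" "5 dvd d" using ea ed by simp_all
  have d2: "\<not> 5 dvd b" unfolding eb by presburger
  have c1: "condM a b c d \<longleftrightarrow> 5 dvd (x + w)"
    unfolding condM_def using d1 d2 by (simp add: cong_iff_dvd_diff)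
  show ?thesis using c1 c2 c3 by simp
qed

lemma key:
  fixes k :: int
  assumes kk: "k mod 10 \<in> {2, 4, 6, 8}" and M: "(a,b,c,d) \<in> Gamma_theta5"
  shows "(nu_G k (a,b,c,d) = 1 \<longleftrightarrow> condM a b c d) \<and> (nu_F k (a,b,c,d) = 1 \<longleftrightarrow> condM a b c d)"
proof -
  have "(25 dvd NG (a,b,c,d) \<longleftrightarrow> condM a b c d) \<and> (25 dvd NF (a,b,c,d) \<longleftrightarrow> condM a b c d)"
    using M unfolding Gamma_theta5_def using case_congI case_congmI case_congS case_congmS by blast
  moreover have "nu_G k (a,b,c,d) = 1 \<longleftrightarrow> 25 dvd NG (a,b,c,d)"
    unfolding nu_G_def g_NG exp_lem using kdiv[OF kk] by blast
  moreover have "nu_F k (a,b,c,d) = 1 \<longleftrightarrow> 25 dvd NF (a,b,c,d)"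
    unfolding nu_F_def f_NF exp_lem using kdiv[OF kk] by blast
  ultimately show ?thesis by blast
qed

theorem mainTheorem12:
  fixes k :: int
  assumes "k mod 10 \<in> {2, 4, 6, 8}"
  shows "ker_nu_G k = {(a,b,c,d) \<in> Gamma_theta5.
            (5 dvd b \<and> 5 dvd c \<and> [b div 5 = c div 5] (mod 5)) \<or>
            (5 dvd a \<and> 5 dvd d \<and> [a div 5 = - (d div 5)] (mod 5))}
       \<and> ker_nu_G k = ker_nu_F k"
proof -
  have A: "ker_nu_G k = {(a,b,c,d) \<in> Gamma_theta5. condM a b c d}"
  proof (rule set_eqI)
    fix M :: mat2
    obtain a b c d where M: "M = (a,b,c,d)" by (cases M) auto
    show "M \<in> ker_nu_G k \<longleftrightarrow> M \<in> {(a,b,c,d) \<in> Gamma_theta5. condM a b c d}"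
      unfolding M ker_nu_G_def using key[OF assms, of a b c d] by auto
  qed
  have B: "ker_nu_F k = {(a,b,c,d) \<in> Gamma_theta5. condM a b c d}"
  proof (rule set_eqI)
    fix M :: mat2
    obtain a b c d where M: "M = (a,b,c,d)" by (cases M) auto
    show "M \<in> ker_nu_F k \<longleftrightarrow> M \<in> {(a,b,c,d) \<in> Gamma_theta5. condM a b c d}"
      unfolding M ker_nu_F_def using key[OF assms, of a b c d] by auto
  qed
  show ?thesis using A B unfolding condM_def by simp
qed

end
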